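(* Let $x_->x_+>0$ be real numbers and $\omega>0$. On $\mathbb{C}^4$ with orthonormal basis $\{|0\rangle,|1\rangle,|2\rangle,|3\rangle\}$ define the Hermitian operators $$X\coloneqq (x_--x_+)(|1\rangle\langle 2|+|2\rangle\langle 1|)+\sqrt{x_+x_-}\,(|0\rangle\langle 1|+|1\rangle\langle 0|+|2\rangle\langle 3|+|3\rangle\langle 2|),$$ $$Y\coloneqq -i(x_--x_+)(|1\rangle\langle 2|-|2\rangle\langle 1|)-i\sqrt{x_+x_-}\,(|0\rangle\langle 1|-|1\rangle\langle 0|+|2\rangle\langle 3|-|3\rangle\langle 2|),$$ and the Hamiltonian $H\coloneqq\omega\sum_{n=0}^3 n\,|n\rangle\langle n|$, with $X(t)\coloneqq e^{iHt}Xe^{-iHt}$, $Y(t)\coloneqq e^{iHt}Ye^{-iHt}$. Then: (i) the spectrum of $X$ is $\{-x_-,-x_+,x_+,x_-\}$; (ii) for all $t$, $X(t)=\cos(\omega t)X+\sin(\omega t)Y$ and $Y(t)=\cos(\omega t)Y-\sin(\omega t)X$; (iii) with $t_k\coloneqq 2\pi k/(3\omega)$ and $|\psi\rangle\coloneqq(|0\rangle-|3\rangle)/\sqrt2$, $$\frac13\sum_{k=0}^2\langle\psi|\Theta(X(t_k))|\psi\rangle=\big(1+x_+/x_-\big)^{-1}.$$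
   Context: For a Hermitian operator $A$ on a finite-dimensional Hilbert space, $\Theta(A)$ denotes the spectral function of $A$ with $\Theta(a)=1$ for $a>0$, $\Theta(a)=0$ for $a<0$, $\Theta(0)=1/2$; i.e. the projector onto the positive-eigenvalue eigenspace plus one half the projector onto the kernel. *)

theory Defs
  imports "HOL-Analysis.Analysis" "HOL-Library.Numeral_Type"
begin

type_synonym cmat4 = "complex ^ 4 ^ 4"
type_synonym cvec4 = "complex ^ 4"

definition ket :: "4 \<Rightarrow> cvec4" where
  "ket a = (\<chi> i. if i = a then 1 else 0)"

definition ketbra :: "4 \<Rightarrow> 4 \<Rightarrow> cmat4" where
  "ketbra a b = (\<chi> i j. if i = a \<and> j = b then 1 else 0)"

definition cscale :: "complex \<Rightarrow> cmat4 \<Rightarrow> cmat4" where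
  "cscale c M = (\<chi> i j. c * M $ i $ j)"

definition madj :: "cmat4 \<Rightarrow> cmat4" where
  "madj M = (\<chi> i j. cnj (M $ j $ i))"

primrec mpow :: "cmat4 \<Rightarrow> nat \<Rightarrow> cmat4" where
  "mpow A 0 = mat 1"
| "mpow A (Suc n) = A ** mpow A n"

definition mexp :: "cmat4 \<Rightarrow> cmat4" where
  "mexp A = (\<Sum>k. (1 / fact k) *\<^sub>R mpow A k)"

definition spectrum :: "cmat4 \<Rightarrow> complex set" where
  "spectrum A = {l. \<exists>v. v \<noteq> 0 \<and> A *v v = l *s v}"

definition eigenspace :: "cmat4 \<Rightarrow> complex \<Rightarrow> cvec4 set" where
  "eigenspace A l = {v. A *v v = l *s v}"

definition proj :: "cvec4 set \<Rightarrow> cmat4" where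
  "proj S = (THE P. P ** P = P \<and> madj P = P \<and> range (\<lambda>v. P *v v) = S)"

definition Theta :: "cmat4 \<Rightarrow> cmat4" where
  "Theta A = proj (span (\<Union>l\<in>{l \<in> spectrum A. Im l = 0 \<and> Re l > 0}. eigenspace A l))
             + cscale (1/2) (proj {v. A *v v = 0})"

definition expval :: "cvec4 \<Rightarrow> cmat4 \<Rightarrow> complex" where
  "expval psi M = (\<Sum>i\<in>UNIV. cnj (psi $ i) * (M *v psi) $ i)"

definition Xop :: "real \<Rightarrow> real \<Rightarrow> cmat4" where
  "Xop xm xp = cscale (complex_of_real (xm - xp)) (ketbra 1 2 + ketbra 2 1)
              + cscale (complex_of_real (sqrt (xp * xm)))
                  (ketbra 0 1 + ketbra 1 0 + ketbra 2 3 + ketbra 3 2)"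

definition Yop :: "real \<Rightarrow> real \<Rightarrow> cmat4" where
  "Yop xm xp = cscale (- \<i> * complex_of_real (xm - xp)) (ketbra 1 2 - ketbra 2 1)
              + cscale (- \<i> * complex_of_real (sqrt (xp * xm)))
                  (ketbra 0 1 - ketbra 1 0 + ketbra 2 3 - ketbra 3 2)"

definition Hop :: "real \<Rightarrow> cmat4" where
  "Hop \<omega> = cscale (complex_of_real \<omega>) (\<Sum>n<4. cscale (of_nat n) (ketbra (of_nat n) (of_nat n)))"

definition heis :: "cmat4 \<Rightarrow> cmat4 \<Rightarrow> real \<Rightarrow> cmat4" where
  "heis H A t = mexp (cscale (\<i> * complex_of_real t) H) ** A
                  ** mexp (cscale (- \<i> * complex_of_real t) H)"

definition psi :: cvec4 where
  "psi = (\<chi> i. complex_of_real (1 / sqrt 2) * (ket 0 - ket 3) $ i)"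

end

theory Submission
  imports Defs
begin

lemma UNIV4: "(UNIV::4 set) = {0,1,2,3}"
  using UNIV_4 by auto
lemma sum4: "sum f (UNIV::4 set) = f 0 + f 1 + f 2 + f 3"
  unfolding UNIV4 by (simp add: ac_simps)
lemma ex4: "(i::4) = 0 \<or> i = 1 \<or> i = 2 \<or> i = 3"
  using UNIV4 by auto

definition dg :: "(4 \<Rightarrow> complex) \<Rightarrow> cmat4" where
  "dg f = (\<chi> i j. if i = j then f i else 0)"
lemma dg_nth: "dg f $ i $ j = (if i = j then f i else 0)"
  by (simp add: dg_def)

lemma dg_mult_nth: "(dg f ** dg g) $ i $ j = (if i = j then f i * g i else 0)"
proof -
  have "(dg f ** dg g) $ i $ j = (\<Sum>k\<in>UNIV. if k = i then (if i = j then f i * g i else 0) else 0)"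
    unfolding matrix_matrix_mult_def vec_lambda_beta dg_nth
    by (rule sum.cong) auto
  also have "\<dots> = (if i = j then f i * g i else 0)" by simp
  finally show ?thesis .
qed
lemma dg_mult: "dg f ** dg g = dg (\<lambda>i. f i * g i)"
  by (simp add: vec_eq_iff dg_mult_nth dg_nth)

lemma mpow_dg: "mpow (dg f) k = dg (\<lambda>i. f i ^ k)"
proof (induction k)
  case 0
  then show ?case by (simp add: vec_eq_iff dg_nth mat_def)
next
  case (Suc k)
  then show ?case by (simp add: dg_mult)
qed

lemma mexp_dg: "mexp (dg f) = dg (\<lambda>i. exp (f i))"
proof -
  have "(\<lambda>k. (1 / fact k) *\<^sub>R mpow (dg f) k) sums dg (\<lambda>i. exp (f i))"
    unfolding sums_def
  proof (rule vec_tendstoI)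
    fix i
    show "((\<lambda>m. (\<Sum>k<m. (1 / fact k) *\<^sub>R mpow (dg f) k) $ i) \<longlongrightarrow> dg (\<lambda>i. exp (f i)) $ i) sequentially"
    proof (rule vec_tendstoI)
      fix j
      show "((\<lambda>m. (\<Sum>k<m. (1 / fact k) *\<^sub>R mpow (dg f) k) $ i $ j) \<longlongrightarrow> dg (\<lambda>i. exp (f i)) $ i $ j) sequentially"
      proof (cases "i = j")
        case True
        have "(\<lambda>n. f i ^ n /\<^sub>R fact n) sums exp (f i)" by (rule exp_converges)
        then show ?thesis using True by (simp add: mpow_dg dg_nth sums_def divide_inverse)
      next
        case False
        then show ?thesis by (simp add: mpow_dg dg_nth)
      qed
    qed
  qed
  then show ?thesis unfolding mexp_def by (rule sums_unique[symmetric])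
qed

definition hv :: "4 \<Rightarrow> real" where
  "hv i = (if i = 0 then 0 else if i = 1 then 1 else if i = 2 then 2 else 3)"
lemma Hsum: "(\<Sum>n<4. cscale (of_nat n) (ketbra (of_nat n) (of_nat n)))
   = cscale 0 (ketbra 0 0) + cscale 1 (ketbra 1 1) + cscale 2 (ketbra 2 2) + cscale 3 (ketbra 3 3)"
  by (simp add: lessThan_nat_numeral)
lemma Hop_nth: "Hop \<omega> $ i $ j = (if i = j then complex_of_real (\<omega> * hv i) else 0)"
proof -
  have "Hop \<omega> $ i $ j = of_real \<omega> * ((if i = 1 \<and> j = 1 then 1 else 0) + (if i = 2 \<and> j = 2 then 2 else 0)
        + (if i = 3 \<and> j = 3 then 3 else 0))"
    unfolding Hop_def Hsum by (simp add: cscale_def ketbra_def)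
  then show ?thesis using ex4[of i] ex4[of j] by (auto simp: hv_def)
qed
lemma Hop_dg: "Hop \<omega> = dg (\<lambda>i. complex_of_real (\<omega> * hv i))"
  by (simp add: vec_eq_iff dg_nth Hop_nth)
lemma cscale_dg: "cscale c (dg f) = dg (\<lambda>i. c * f i)"
  by (simp add: cscale_def vec_eq_iff dg_nth)

lemma dg_left_nth: "(dg f ** A) $ j $ m = f j * A $ j $ m"
proof -
  have "(dg f ** A) $ j $ m = (\<Sum>k\<in>UNIV. if k = j then f j * A $ j $ m else 0)"
    unfolding matrix_matrix_mult_def vec_lambda_beta dg_nth
    by (rule sum.cong) auto
  then show ?thesis by simp
qed
lemma dg_right_nth: "(A ** dg g) $ j $ k = A $ j $ k * g k"
proof -
  have "(A ** dg g) $ j $ k = (\<Sum>m\<in>UNIV. if m = k then A $ j $ k * g k else 0)"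
    unfolding matrix_matrix_mult_def vec_lambda_beta dg_nth
    by (rule sum.cong) auto
  then show ?thesis by simp
qed

lemma heis_nth: "heis (Hop \<omega>) A t $ j $ k = cis (t * \<omega> * hv j) * A $ j $ k * cis (- (t * \<omega> * hv k))"
proof -
  have e: "exp (c * complex_of_real (\<omega> * hv i)) = cis (r * \<omega> * hv i)" if "c = \<i> * complex_of_real r" for c r i
    unfolding that cis_conv_exp by (simp add: mult_ac)
  show ?thesis
    unfolding heis_def Hop_dg cscale_dg mexp_dg dg_right_nth dg_left_nth
    using e[of "\<i> * complex_of_real t" t j] e[of "- \<i> * complex_of_real t" "-t" k] by simp
qed



definition ip :: "cvec4 \<Rightarrow> cvec4 \<Rightarrow> complex" where
  "ip u v = (\<Sum>j\<in>UNIV. cnj (u $ j) * v $ j)"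

lemma ip_sum: "ip u (\<Sum>m\<in>S. a m *s w m) = (\<Sum>m\<in>S. a m * ip u (w m))"
proof -
  have "ip u (\<Sum>m\<in>S. a m *s w m) = (\<Sum>j\<in>UNIV. \<Sum>m\<in>S. a m * (cnj (u $ j) * w m $ j))"
    unfolding ip_def by (simp add: sum_distrib_left mult_ac)
  also have "\<dots> = (\<Sum>m\<in>S. \<Sum>j\<in>UNIV. a m * (cnj (u $ j) * w m $ j))"
    by (rule sum.swap)
  also have "\<dots> = (\<Sum>m\<in>S. a m * ip u (w m))"
    unfolding ip_def by (simp add: sum_distrib_left)
  finally show ?thesis .
qed
lemma ip_add: "ip u (v + v') = ip u v + ip u v'"
  unfolding ip_def by (simp add: distrib_left sum.distrib)
lemma ip_smult: "ip u (c *s v) = c * ip u v"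
  unfolding ip_def by (simp add: sum_distrib_left mult_ac)
lemma ip_scaleR: "ip u (r *\<^sub>R v) = complex_of_real r * ip u v"
  unfolding ip_def by (simp add: sum_distrib_left scaleR_conv_of_real[symmetric])
lemma ip_zero: "ip u 0 = 0"
  unfolding ip_def by simp
lemma ip_self_zero: "ip 0 v = 0"
  unfolding ip_def by simp

lemma mv_sum: fixes A :: cmat4 shows "A *v (\<Sum>m\<in>S. a m *s w m) = (\<Sum>m\<in>S. a m *s (A *v w m))"
proof -
  have "\<And>j. (A *v (\<Sum>m\<in>S. a m *s w m)) $ j = (\<Sum>k\<in>UNIV. \<Sum>m\<in>S. a m * (A $ j $ k * w m $ k))"
    unfolding matrix_vector_mult_def by (auto simp: sum_distrib_left mult.left_commute intro!: sum.cong)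
  moreover have "\<And>j. (\<Sum>k\<in>UNIV. \<Sum>m\<in>S. a m * (A $ j $ k * w m $ k)) = (\<Sum>m\<in>S. \<Sum>k\<in>UNIV. a m * (A $ j $ k * w m $ k))"
    by (rule sum.swap)
  moreover have "\<And>j. (\<Sum>m\<in>S. a m *s (A *v w m)) $ j = (\<Sum>m\<in>S. \<Sum>k\<in>UNIV. a m * (A $ j $ k * w m $ k))"
    unfolding matrix_vector_mult_def by (simp add: sum_distrib_left)
  ultimately show ?thesis by (simp add: vec_eq_iff)
qed
lemma mv_smult: fixes A :: cmat4 shows "A *v (c *s v) = c *s (A *v v)"
  unfolding matrix_vector_mult_def by (auto simp: vec_eq_iff sum_distrib_left mult.left_commute intro!: sum.cong)

definition madjP :: "cmat4 \<Rightarrow> bool" where "madjP P \<longleftrightarrow> madj P = P"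

lemma madj_mult: "madj (A ** B) = madj B ** madj A"
  unfolding madj_def matrix_matrix_mult_def by (simp add: vec_eq_iff mult.commute)

lemma proj_unique:
  assumes "P ** P = P" "madj P = P" "range (\<lambda>v. P *v v) = S"
  shows "proj S = P"
  unfolding proj_def
proof (rule the_equality)
  show "P ** P = P \<and> madj P = P \<and> range ((*v) P) = S" using assms by simp
next
  fix Q assume Q: "Q ** Q = Q \<and> madj Q = Q \<and> range ((*v) Q) = S"
  have fix1: "A ** B = B" if "A ** A = A" "range ((*v) B) \<subseteq> range ((*v) A)" for A B :: cmat4
  proof -
    have "(A ** B) *v x = B *v x" for x
    proof -
      from that(2) obtain y where "B *v x = A *v y" by auto
      then show ?thesis using that(1) by (metis matrix_vector_mul_assoc)
    qed
    then show ?thesis by (simp add: matrix_eq)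
  qed
  have QP: "Q ** P = P" using fix1[of Q P] Q assms by simp
  have PQ: "P ** Q = Q" using fix1[of P Q] Q assms by simp
  have "P = madj (Q ** P)" using QP assms by simp
  also have "\<dots> = P ** Q" using Q assms by (simp add: madj_mult)
  finally show "Q = P" using PQ by simp
qed



definition eigbasis :: "cmat4 \<Rightarrow> (4 \<Rightarrow> cvec4) \<Rightarrow> (4 \<Rightarrow> real) \<Rightarrow> (4 \<Rightarrow> real) \<Rightarrow> bool" where
  "eigbasis A w l n \<longleftrightarrow> (\<forall>i. A *v w i = complex_of_real (l i) *s w i)
     \<and> (\<forall>i j. i \<noteq> j \<longrightarrow> ip (w i) (w j) = 0)
     \<and> (\<forall>i. ip (w i) (w i) = complex_of_real (n i) \<and> n i \<noteq> 0)
     \<and> (\<forall>j k. (\<Sum>i\<in>UNIV. w i $ j * cnj (w i $ k) / complex_of_real (n i)) = (if j = k then 1 else 0))"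

definition cf :: "(4 \<Rightarrow> cvec4) \<Rightarrow> (4 \<Rightarrow> real) \<Rightarrow> 4 \<Rightarrow> cvec4 \<Rightarrow> complex" where
  "cf w n i v = ip (w i) v / complex_of_real (n i)"

context
  fixes A w l n
  assumes eb: "eigbasis A w l n"
begin


lemma eig: "A *v w i = complex_of_real (l i) *s w i" using eb unfolding eigbasis_def by blast
lemma orth: "i \<noteq> j \<Longrightarrow> ip (w i) (w j) = 0" using eb unfolding eigbasis_def by blast
lemma nrm: "ip (w i) (w i) = complex_of_real (n i)" "n i \<noteq> 0" using eb unfolding eigbasis_def by blast+
lemma comp: "(\<Sum>i\<in>UNIV. w i $ j * cnj (w i $ k) / complex_of_real (n i)) = (if j = k then 1 else 0)"
  using eb unfolding eigbasis_def by blast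

lemma expand: "v = (\<Sum>i\<in>UNIV. cf w n i v *s w i)"
proof -
  have "(\<Sum>i\<in>UNIV. cf w n i v *s w i) $ j = v $ j" for j
  proof -
    have "(\<Sum>i\<in>UNIV. cf w n i v *s w i) $ j = (\<Sum>i\<in>UNIV. \<Sum>k\<in>UNIV. v $ k * (w i $ j * cnj (w i $ k) / complex_of_real (n i)))"
      unfolding cf_def ip_def by (auto simp: sum_distrib_left sum_distrib_right sum_divide_distrib intro!: sum.cong)
    also have "\<dots> = (\<Sum>k\<in>UNIV. \<Sum>i\<in>UNIV. v $ k * (w i $ j * cnj (w i $ k) / complex_of_real (n i)))"
      by (rule sum.swap)
    also have "\<dots> = (\<Sum>k\<in>UNIV. v $ k * (if j = k then 1 else 0))"
      by (simp only: sum_distrib_left[symmetric] comp)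
    also have "\<dots> = v $ j" by (simp add: if_distrib cong: if_cong)
    finally show ?thesis .
  qed
  then show ?thesis by (simp add: vec_eq_iff)
qed

lemma cf_sum: "cf w n i (\<Sum>m\<in>S. a m *s w m) = (if i \<in> S then a i else 0)"
proof -
  have "cf w n i (\<Sum>m\<in>S. a m *s w m) = (\<Sum>m\<in>S. if m = i then a i else 0)"
    unfolding cf_def ip_sum sum_divide_distrib
    by (rule sum.cong) (auto simp: orth nrm)
  then show ?thesis by simp
qed

lemma cf_add: "cf w n i (v + v') = cf w n i v + cf w n i v'"
  unfolding cf_def ip_add by (simp add: add_divide_distrib)
lemma cf_smult: "cf w n i (c *s v) = c * cf w n i v"
  unfolding cf_def ip_smult by simp
lemma cf_scaleR: "cf w n i (r *\<^sub>R v) = complex_of_real r * cf w n i v"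
  unfolding cf_def ip_scaleR by simp
lemma cf_zero: "cf w n i 0 = 0"
  unfolding cf_def ip_zero by simp

lemma cf_A: "cf w n i (A *v v) = complex_of_real (l i) * cf w n i v"
proof -
  have "A *v v = A *v (\<Sum>m\<in>UNIV. cf w n m v *s w m)" using expand[of v] by simp
  also have "\<dots> = (\<Sum>m\<in>UNIV. (cf w n m v * complex_of_real (l m)) *s w m)"
    unfolding mv_sum eig by (simp add: vector_smult_assoc)
  finally show ?thesis by (simp add: cf_sum)
qed

lemma eig_cf: assumes "A *v v = \<mu> *s v" shows "cf w n i v * (complex_of_real (l i) - \<mu>) = 0"
proof -
  have "cf w n i v * complex_of_real (l i) = cf w n i v * \<mu>"
    using cf_A[of i v] cf_smult[of i \<mu> v] assms by (simp add: mult.commute) (metis)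
  then show ?thesis by (simp add: right_diff_distrib)
qed

lemma nonzero_cf: assumes "v \<noteq> 0" shows "\<exists>i. cf w n i v \<noteq> 0"
proof (rule ccontr)
  assume "\<not> (\<exists>i. cf w n i v \<noteq> 0)"
  then have "\<forall>i. cf w n i v = 0" by auto
  then have "v = 0" using expand[of v] by simp
  then show False using assms by simp
qed

lemma w_nz: "w i \<noteq> 0"
  using nrm[of i] ip_self_zero by force

lemma spec: "spectrum A = range (\<lambda>i. complex_of_real (l i))"
proof
  show "spectrum A \<subseteq> range (\<lambda>i. complex_of_real (l i))"
  proof
    fix \<mu> assume "\<mu> \<in> spectrum A"
    then obtain v where v: "v \<noteq> 0" "A *v v = \<mu> *s v" unfolding spectrum_def by auto
    obtain i where "cf w n i v \<noteq> 0" using nonzero_cf v(1) by auto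
    then have "\<mu> = complex_of_real (l i)" using eig_cf[OF v(2), of i] by simp
    then show "\<mu> \<in> range (\<lambda>i. complex_of_real (l i))" by auto
  qed
next
  show "range (\<lambda>i. complex_of_real (l i)) \<subseteq> spectrum A"
    unfolding spectrum_def using eig w_nz by blast
qed

end



lemma proj_zero: "proj {0} = 0"
  by (rule proj_unique) (auto simp: madj_def vec_eq_iff matrix_matrix_mult_def)

context
  fixes A w l n
  assumes eb: "eigbasis A w l n"
begin

definition PP :: cmat4 where
  "PP = (\<chi> j k. \<Sum>i\<in>{0,1}. w i $ j * cnj (w i $ k) / complex_of_real (n i))"

lemma cf_w: "cf w n i (w m) = (if i = m then 1 else 0)"
  by (cases "i = m") (simp_all add: cf_def orth[OF eb] nrm[OF eb])

lemma cf2: "cf w n i (a *s w 0 + b *s w 1) = (if i = 0 then a else if i = 1 then b else 0)"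
  by (simp add: cf_add[OF eb] cf_smult[OF eb] cf_w)

lemma PP_mv: "PP *v v = cf w n 0 v *s w 0 + cf w n 1 v *s w 1"
proof -
  have "(PP *v v) $ j = (cf w n 0 v *s w 0 + cf w n 1 v *s w 1) $ j" for j
  proof -
    have "(PP *v v) $ j = (\<Sum>k\<in>UNIV. w 0 $ j * (cnj (w 0 $ k) * v $ k) / complex_of_real (n 0)
                          + w 1 $ j * (cnj (w 1 $ k) * v $ k) / complex_of_real (n 1))"
      unfolding PP_def matrix_vector_mult_def by (simp add: algebra_simps)
    also have "\<dots> = (cf w n 0 v *s w 0 + cf w n 1 v *s w 1) $ j"
      unfolding cf_def ip_def sum.distrib by (simp add: sum_distrib_left sum_divide_distrib mult_ac)
    finally show ?thesis .
  qed
  then show ?thesis by (simp add: vec_eq_iff)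
qed

lemma PP_idem: "PP ** PP = PP"
proof -
  have "(PP ** PP) *v x = PP *v x" for x
    unfolding matrix_vector_mul_assoc[symmetric] PP_mv[of x] PP_mv[of "cf w n 0 x *s w 0 + cf w n 1 x *s w 1"]
    by (simp add: cf2)
  then show ?thesis by (simp add: matrix_eq)
qed

lemma PP_adj: "madj PP = PP"
  unfolding PP_def madj_def by (simp add: vec_eq_iff mult.commute)

definition TT :: "cvec4 set" where "TT = {v. cf w n 2 v = 0 \<and> cf w n 3 v = 0}"

lemma TT_expand: "v \<in> TT \<Longrightarrow> v = cf w n 0 v *s w 0 + cf w n 1 v *s w 1"
  using expand[OF eb, of v] unfolding TT_def sum4 by simp

lemma PP_range: "range (\<lambda>v. PP *v v) = TT"
proof
  show "range (\<lambda>v. PP *v v) \<subseteq> TT"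
    unfolding TT_def PP_mv by (auto simp: cf2)
  show "TT \<subseteq> range (\<lambda>v. PP *v v)"
  proof
    fix v assume "v \<in> TT"
    then have "PP *v v = v" using TT_expand unfolding PP_mv by simp
    then show "v \<in> range (\<lambda>v. PP *v v)" by (metis rangeI)
  qed
qed

lemma proj_TT: "proj TT = PP"
  using proj_unique PP_idem PP_adj PP_range by blast

lemma span_pos:
  assumes "l 0 > 0" "l 1 > 0" "l 2 < 0" "l 3 < 0"
  shows "span (\<Union>\<mu>\<in>{\<mu> \<in> spectrum A. Im \<mu> = 0 \<and> Re \<mu> > 0}. eigenspace A \<mu>) = TT"
proof
  show "span (\<Union>\<mu>\<in>{\<mu> \<in> spectrum A. Im \<mu> = 0 \<and> Re \<mu> > 0}. eigenspace A \<mu>) \<subseteq> TT"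
  proof (rule span_minimal)
    show "(\<Union>\<mu>\<in>{\<mu> \<in> spectrum A. Im \<mu> = 0 \<and> Re \<mu> > 0}. eigenspace A \<mu>) \<subseteq> TT"
    proof
      fix v assume "v \<in> (\<Union>\<mu>\<in>{\<mu> \<in> spectrum A. Im \<mu> = 0 \<and> Re \<mu> > 0}. eigenspace A \<mu>)"
      then obtain \<mu> where mu: "\<mu> \<in> spectrum A" "Re \<mu> > 0" "A *v v = \<mu> *s v"
        unfolding eigenspace_def by auto
      obtain i where i: "\<mu> = complex_of_real (l i)" using mu(1) spec[OF eb] by auto
      have "l i > 0" using mu(2) i by simp
      have "cf w n j v = 0" if "l j < 0" for j
      proof -
        have "l j - l i \<noteq> 0" using \<open>l i > 0\<close> that by linarith
        moreover have "complex_of_real (l j) - \<mu> = complex_of_real (l j - l i)" using i by simp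
        ultimately have "complex_of_real (l j) - \<mu> \<noteq> 0" by (simp only: of_real_eq_0_iff not_False_eq_True)
        then show ?thesis using eig_cf[OF eb mu(3), of j] by simp
      qed
      then show "v \<in> TT" unfolding TT_def using assms by simp
    qed
    show "subspace TT"
      unfolding subspace_def TT_def by (simp add: cf_zero[OF eb] cf_add[OF eb] cf_scaleR[OF eb])
  qed
  show "TT \<subseteq> span (\<Union>\<mu>\<in>{\<mu> \<in> spectrum A. Im \<mu> = 0 \<and> Re \<mu> > 0}. eigenspace A \<mu>)"
  proof
    fix v assume v: "v \<in> TT"
    have mem: "c *s w i \<in> (\<Union>\<mu>\<in>{\<mu> \<in> spectrum A. Im \<mu> = 0 \<and> Re \<mu> > 0}. eigenspace A \<mu>)"
      if "l i > 0" for c i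
    proof -
      have "A *v (c *s w i) = complex_of_real (l i) *s (c *s w i)"
        by (simp add: mv_smult eig[OF eb] vector_smult_assoc mult.commute)
      moreover have "complex_of_real (l i) \<in> spectrum A" using spec[OF eb] by auto
      ultimately show ?thesis using that unfolding eigenspace_def by auto
    qed
    show "v \<in> span (\<Union>\<mu>\<in>{\<mu> \<in> spectrum A. Im \<mu> = 0 \<and> Re \<mu> > 0}. eigenspace A \<mu>)"
    proof -
      have "cf w n 0 v *s w 0 \<in> span (\<Union>\<mu>\<in>{\<mu> \<in> spectrum A. Im \<mu> = 0 \<and> Re \<mu> > 0}. eigenspace A \<mu>)"
        by (rule span_base, rule mem, rule assms(1))
      moreover have "cf w n 1 v *s w 1 \<in> span (\<Union>\<mu>\<in>{\<mu> \<in> spectrum A. Im \<mu> = 0 \<and> Re \<mu> > 0}. eigenspace A \<mu>)"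
        by (rule span_base, rule mem, rule assms(2))
      ultimately show ?thesis by (subst TT_expand[OF v]) (rule span_add)
    qed
  qed
qed

lemma kernel_zero:
  assumes "\<And>i. l i \<noteq> 0"
  shows "{v. A *v v = 0} = {0}"
proof -
  have "v = 0" if "A *v v = 0" for v
  proof (rule ccontr)
    assume "v \<noteq> 0"
    then obtain i where "cf w n i v \<noteq> 0" using nonzero_cf[OF eb] by auto
    moreover have "A *v v = 0 *s v" using that by simp
    ultimately show False using eig_cf[OF eb, of v 0 i] assms[of i] by simp
  qed
  then show ?thesis by auto
qed

lemma Theta_eq:
  assumes "l 0 > 0" "l 1 > 0" "l 2 < 0" "l 3 < 0"
  shows "Theta A = PP"
proof -
  have "\<And>i. l i \<noteq> 0" using assms ex4 by (metis less_irrefl)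
  then show ?thesis
    unfolding Theta_def span_pos[OF assms] kernel_zero[OF \<open>\<And>i. l i \<noteq> 0\<close>] proj_TT proj_zero
    by (simp add: cscale_def vec_eq_iff)
qed

end



lemma eigbasis_conj:
  assumes eb: "eigbasis A u l n" and z: "\<And>j. cnj (z j) * z j = 1"
  shows "eigbasis (\<chi> j k. z j * A $ j $ k * cnj (z k)) (\<lambda>i. \<chi> j. z j * u i $ j) l n"
proof -
  let ?B = "(\<chi> j k. z j * A $ j $ k * cnj (z k)) :: cmat4"
  let ?w = "\<lambda>i. (\<chi> j. z j * u i $ j) :: cvec4"
  have z2: "z j * cnj (z j) = 1" for j using z[of j] by (simp add: mult.commute)
  have "?B *v ?w i = complex_of_real (l i) *s ?w i" for i
  proof -
    have "(?B *v ?w i) $ j = z j * (A *v u i) $ j" for j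
    proof -
      have "(?B *v ?w i) $ j = (\<Sum>k\<in>UNIV. z j * (A $ j $ k * u i $ k) * (cnj (z k) * z k))"
        unfolding matrix_vector_mult_def by (simp add: mult_ac)
      also have "\<dots> = z j * (A *v u i) $ j"
        unfolding matrix_vector_mult_def z by (simp add: sum_distrib_left)
      finally show ?thesis .
    qed
    then show ?thesis using eig[OF eb, of i] by (simp add: vec_eq_iff mult_ac)
  qed
  moreover have ipw: "ip (?w i) (?w j) = ip (u i) (u j)" for i j
  proof -
    have "ip (?w i) (?w j) = (\<Sum>m\<in>UNIV. cnj (u i $ m) * u j $ m * (cnj (z m) * z m))"
      unfolding ip_def by (simp add: mult_ac)
    then show ?thesis unfolding z ip_def by simp
  qed
  moreover have "(\<Sum>i\<in>UNIV. ?w i $ j * cnj (?w i $ k) / complex_of_real (n i)) = (if j = k then 1 else 0)" for j k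
  proof -
    have "(\<Sum>i\<in>UNIV. ?w i $ j * cnj (?w i $ k) / complex_of_real (n i))
        = z j * cnj (z k) * (\<Sum>i\<in>UNIV. u i $ j * cnj (u i $ k) / complex_of_real (n i))"
      by (simp add: sum_distrib_left mult_ac)
    then show ?thesis using comp[OF eb, of j k] z2 by simp
  qed
  ultimately show ?thesis using eb unfolding eigbasis_def by simp
qed

lemma eigbasis_real:
  fixes A :: cmat4 and U :: "4 \<Rightarrow> 4 \<Rightarrow> real" and Ar :: "4 \<Rightarrow> 4 \<Rightarrow> real"
  assumes A: "\<And>j k. A $ j $ k = complex_of_real (Ar j k)"
    and R1: "\<And>i j. (\<Sum>k\<in>UNIV. Ar j k * U i k) = l i * U i j"
    and R2: "\<And>i j. i \<noteq> j \<Longrightarrow> (\<Sum>k\<in>UNIV. U i k * U j k) = 0"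
    and R3: "\<And>i. (\<Sum>k\<in>UNIV. U i k * U i k) = n i" "\<And>i. n i \<noteq> 0"
    and R4: "\<And>j k. (\<Sum>i\<in>UNIV. U i j * U i k / n i) = (if j = k then 1 else 0)"
  shows "eigbasis A (\<lambda>i. \<chi> j. complex_of_real (U i j)) l n"
proof -
  have ipr: "ip (\<chi> j. complex_of_real (U i j)) (\<chi> j. complex_of_real (U i' j)) = complex_of_real (\<Sum>k\<in>UNIV. U i k * U i' k)" for i i'
    unfolding ip_def by simp
  have "A *v (\<chi> j. complex_of_real (U i j)) = complex_of_real (l i) *s (\<chi> j. complex_of_real (U i j))" for i
  proof -
    have "(A *v (\<chi> j. complex_of_real (U i j))) $ j = complex_of_real (\<Sum>k\<in>UNIV. Ar j k * U i k)" for j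
      unfolding matrix_vector_mult_def A by simp
    then show ?thesis by (simp add: vec_eq_iff R1)
  qed
  moreover have "(\<Sum>i\<in>UNIV. (\<chi> j. complex_of_real (U i j)) $ j * cnj ((\<chi> j. complex_of_real (U i j)) $ k) / complex_of_real (n i)) = (if j = k then 1 else 0)" for j k
  proof -
    have "(\<Sum>i\<in>UNIV. (\<chi> j. complex_of_real (U i j)) $ j * cnj ((\<chi> j. complex_of_real (U i j)) $ k) / complex_of_real (n i))
       = complex_of_real (\<Sum>i\<in>UNIV. U i j * U i k / n i)" by simp
    then show ?thesis using R4[of j k] by simp
  qed
  ultimately show ?thesis unfolding eigbasis_def ipr using R2 R3 by simp
qed



definition xr :: "real \<Rightarrow> real \<Rightarrow> real \<Rightarrow> 4 \<Rightarrow> 4 \<Rightarrow> real" where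
  "xr xm xp s j k = (if (j = 0 \<and> k = 1) \<or> (j = 1 \<and> k = 0) \<or> (j = 2 \<and> k = 3) \<or> (j = 3 \<and> k = 2) then s
     else if (j = 1 \<and> k = 2) \<or> (j = 2 \<and> k = 1) then xm - xp else 0)"

definition ue :: "real \<Rightarrow> real \<Rightarrow> real \<Rightarrow> 4 \<Rightarrow> 4 \<Rightarrow> real" where
  "ue xm xp s i j = (if i = 0 then (if j = 0 then s else if j = 1 then xp else if j = 2 then - xp else - s)
     else if i = 1 then (if j = 0 then s else if j = 1 then xm else if j = 2 then xm else s)
     else if i = 2 then (if j = 0 then s else if j = 1 then - xp else if j = 2 then - xp else s)
     else (if j = 0 then s else if j = 1 then - xm else if j = 2 then xm else - s))"

definition lX :: "real \<Rightarrow> real \<Rightarrow> 4 \<Rightarrow> real" where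
  "lX xm xp i = (if i = 0 then xp else if i = 1 then xm else if i = 2 then - xp else - xm)"

definition nX :: "real \<Rightarrow> real \<Rightarrow> 4 \<Rightarrow> real" where
  "nX xm xp i = (if i = 0 \<or> i = 2 then 2 * xp * (xm + xp) else 2 * xm * (xm + xp))"

lemma Xop_nth: "Xop xm xp $ j $ k = complex_of_real (xr xm xp (sqrt (xp * xm)) j k)"
proof -
  have "Xop xm xp $ j $ k = complex_of_real (xm - xp) * ((if j = 1 \<and> k = 2 then 1 else 0) + (if j = 2 \<and> k = 1 then 1 else 0))
     + complex_of_real (sqrt (xp * xm)) * ((if j = 0 \<and> k = 1 then 1 else 0) + (if j = 1 \<and> k = 0 then 1 else 0)
        + (if j = 2 \<and> k = 3 then 1 else 0) + (if j = 3 \<and> k = 2 then 1 else 0))"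
    unfolding Xop_def cscale_def ketbra_def by simp
  then show ?thesis using ex4[of j] ex4[of k] by (elim disjE) (simp_all add: xr_def)
qed

lemma X_R1:
  assumes hs: "s * s = xp * xm"
  shows "(\<Sum>k\<in>UNIV. xr xm xp s j k * ue xm xp s i k) = lX xm xp i * ue xm xp s i j"
  using ex4[of i] ex4[of j]
  by (elim disjE) (simp_all add: sum4 xr_def ue_def lX_def algebra_simps hs)

lemma X_R2:
  assumes hs: "s * s = xp * xm" and "i \<noteq> j"
  shows "(\<Sum>k\<in>UNIV. ue xm xp s i k * ue xm xp s j k) = 0"
  using ex4[of i] ex4[of j] assms(2)
  by (elim disjE) (simp_all add: sum4 ue_def algebra_simps hs)

lemma X_R3:
  assumes hs: "s * s = xp * xm"
  shows "(\<Sum>k\<in>UNIV. ue xm xp s i k * ue xm xp s i k) = nX xm xp i"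
  using ex4[of i]
  by (elim disjE) (simp_all add: sum4 ue_def nX_def algebra_simps hs)

lemma X_R4:
  assumes hs: "s * s = xp * xm" and pos: "xp > 0" "xm > 0"
  shows "(\<Sum>i\<in>UNIV. ue xm xp s i j * ue xm xp s i k / nX xm xp i) = (if j = k then 1 else 0)"
proof -
  have a: "xm + xp \<noteq> 0" "xp \<noteq> 0" "xm \<noteq> 0" using pos by simp_all
  show ?thesis using ex4[of j] ex4[of k]
    apply (elim disjE)
    apply (simp_all add: sum4 ue_def nX_def hs)
    apply (simp_all add: a pos divide_simps)
    apply (simp_all add: algebra_simps)
    using pos by linarith+
qed

lemma X_eigbasis:
  assumes pos: "xp > 0" "xm > 0"
  shows "eigbasis (Xop xm xp) (\<lambda>i. \<chi> j. complex_of_real (ue xm xp (sqrt (xp * xm)) i j)) (lX xm xp) (nX xm xp)"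
proof -
  have hs: "sqrt (xp * xm) * sqrt (xp * xm) = xp * xm" using pos by simp
  have "nX xm xp i \<noteq> 0" for i using pos by (simp add: nX_def)
  then show ?thesis
    by (intro eigbasis_real[where Ar = "xr xm xp (sqrt (xp * xm))"] Xop_nth X_R1[OF hs] X_R2[OF hs] X_R3[OF hs] X_R4[OF hs pos])
qed




definition yr :: "real \<Rightarrow> real \<Rightarrow> real \<Rightarrow> 4 \<Rightarrow> 4 \<Rightarrow> real" where
  "yr xm xp s j k = (if (j = 0 \<and> k = 1) \<or> (j = 2 \<and> k = 3) then s
     else if (j = 1 \<and> k = 0) \<or> (j = 3 \<and> k = 2) then - s
     else if j = 1 \<and> k = 2 then xm - xp else if j = 2 \<and> k = 1 then xp - xm else 0)"

lemma Yop_nth: "Yop xm xp $ j $ k = - \<i> * complex_of_real (yr xm xp (sqrt (xp * xm)) j k)"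
proof -
  have "Yop xm xp $ j $ k = - \<i> * complex_of_real (xm - xp) * ((if j = 1 \<and> k = 2 then 1 else 0) - (if j = 2 \<and> k = 1 then 1 else 0))
     + - \<i> * complex_of_real (sqrt (xp * xm)) * ((if j = 0 \<and> k = 1 then 1 else 0) - (if j = 1 \<and> k = 0 then 1 else 0)
        + (if j = 2 \<and> k = 3 then 1 else 0) - (if j = 3 \<and> k = 2 then 1 else 0))"
    unfolding Yop_def cscale_def ketbra_def by simp
  then show ?thesis using ex4[of j] ex4[of k] by (elim disjE) (simp_all add: yr_def algebra_simps)
qed

lemma heis_nth2: "heis (Hop \<omega>) A t $ j $ k = A $ j $ k * cis (t * \<omega> * (hv j - hv k))"
  unfolding heis_nth by (simp add: mult.commute mult.left_commute cis_mult right_diff_distrib)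

lemma partX: "heis (Hop \<omega>) (Xop xm xp) t
               = cscale (complex_of_real (cos (\<omega> * t))) (Xop xm xp)
                 + cscale (complex_of_real (sin (\<omega> * t))) (Yop xm xp)"
proof -
  have "heis (Hop \<omega>) (Xop xm xp) t $ j $ k = (cscale (complex_of_real (cos (\<omega> * t))) (Xop xm xp)
                 + cscale (complex_of_real (sin (\<omega> * t))) (Yop xm xp)) $ j $ k" for j k
    unfolding heis_nth2 cscale_def Xop_nth Yop_nth
    using ex4[of j] ex4[of k]
    apply (elim disjE)
    apply (simp_all add: xr_def yr_def hv_def complex_eq_iff mult.commute)
    apply (simp_all add: algebra_simps)
    done
  then show ?thesis by (simp add: vec_eq_iff)
qed

lemma partY: "heis (Hop \<omega>) (Yop xm xp) t
               = cscale (complex_of_real (cos (\<omega> * t))) (Yop xm xp)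
                 - cscale (complex_of_real (sin (\<omega> * t))) (Xop xm xp)"
proof -
  have "heis (Hop \<omega>) (Yop xm xp) t $ j $ k = (cscale (complex_of_real (cos (\<omega> * t))) (Yop xm xp)
                 - cscale (complex_of_real (sin (\<omega> * t))) (Xop xm xp)) $ j $ k" for j k
    unfolding heis_nth2 cscale_def Xop_nth Yop_nth
    using ex4[of j] ex4[of k]
    apply (elim disjE)
    apply (simp_all add: xr_def yr_def hv_def complex_eq_iff mult.commute)
    apply (simp_all add: algebra_simps)
    done
  then show ?thesis by (simp add: vec_eq_iff)
qed

lemma partSpec:
  assumes "xp > 0" "xm > 0"
  shows "spectrum (Xop xm xp) = {- complex_of_real xm, - complex_of_real xp, complex_of_real xp, complex_of_real xm}"
  unfolding spec[OF X_eigbasis[OF assms]] UNIV4 by (auto simp: lX_def)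

lemma psi_nth: "psi $ j = (if j = 0 then complex_of_real (1 / sqrt 2) else if j = 3 then - complex_of_real (1 / sqrt 2) else 0)"
  unfolding psi_def ket_def using ex4[of j] by auto

lemma expval_psi: "expval psi M = (M $ 0 $ 0 - M $ 0 $ 3 - M $ 3 $ 0 + M $ 3 $ 3) / 2"
proof -
  have h: "complex_of_real (1 / sqrt 2) * complex_of_real (1 / sqrt 2) = 1 / 2"
    by (simp flip: of_real_mult)
  have "expval psi M = complex_of_real (1 / sqrt 2) * complex_of_real (1 / sqrt 2) * (M $ 0 $ 0 - M $ 0 $ 3 - M $ 3 $ 0 + M $ 3 $ 3)"
    unfolding expval_def matrix_vector_mult_def by (simp add: sum4 psi_nth algebra_simps)
  then show ?thesis using h by simp
qed




lemma real_val:
  assumes "xm > xp" "xp > 0"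
  shows "((\<Sum>i\<in>{0,1}. ue xm xp (sqrt (xp * xm)) i 0 * ue xm xp (sqrt (xp * xm)) i 0 / nX xm xp i)
        - (\<Sum>i\<in>{0,1}. ue xm xp (sqrt (xp * xm)) i 0 * ue xm xp (sqrt (xp * xm)) i 3 / nX xm xp i)
        - (\<Sum>i\<in>{0,1}. ue xm xp (sqrt (xp * xm)) i 3 * ue xm xp (sqrt (xp * xm)) i 0 / nX xm xp i)
        + (\<Sum>i\<in>{0,1}. ue xm xp (sqrt (xp * xm)) i 3 * ue xm xp (sqrt (xp * xm)) i 3 / nX xm xp i)) / 2
        = xm / (xm + xp)"
proof -
  have hs: "sqrt (xp * xm) * sqrt (xp * xm) = xp * xm" using assms by simp
  have a: "xm + xp \<noteq> 0" "xp \<noteq> 0" "xm \<noteq> 0" "\<bar>xm * xp\<bar> = xm * xp" "\<bar>xp * xm\<bar> = xp * xm" using assms by simp_all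
  show ?thesis
    apply (simp add: ue_def nX_def hs)
    apply (simp add: a divide_simps)
    done
qed

lemma term_k:
  assumes "xm > xp" "xp > 0" "\<omega> > 0"
  shows "expval psi (Theta (heis (Hop \<omega>) (Xop xm xp) (2 * pi * real k / (3 * \<omega>)))) = complex_of_real (xm / (xm + xp))"
proof -
  define t where "t = 2 * pi * real k / (3 * \<omega>)"
  define z where "z = (\<lambda>j. cis (t * \<omega> * hv j))"
  define u where "u = (\<lambda>i. (\<chi> j. complex_of_real (ue xm xp (sqrt (xp * xm)) i j)) :: cvec4)"
  define w where "w = (\<lambda>i. (\<chi> j. z j * u i $ j) :: cvec4)"
  have pos: "xp > 0" "xm > 0" using assms by simp_all
  have heq: "heis (Hop \<omega>) (Xop xm xp) t = (\<chi> j k. z j * Xop xm xp $ j $ k * cnj (z k))"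
    by (simp add: vec_eq_iff heis_nth z_def cis_cnj)
  have eb: "eigbasis (heis (Hop \<omega>) (Xop xm xp) t) w (lX xm xp) (nX xm xp)"
    unfolding heq w_def u_def
    by (rule eigbasis_conj[OF X_eigbasis[OF pos]]) (simp add: z_def cis_cnj cis_mult)
  have Th: "Theta (heis (Hop \<omega>) (Xop xm xp) t) = PP w (nX xm xp)"
    by (rule Theta_eq[OF eb]) (simp_all add: lX_def pos)
  have z0: "z 0 = 1" by (simp add: z_def hv_def)
  have "t * \<omega> * 3 = 2 * pi * real k" using assms(3) unfolding t_def by (simp add: field_simps)
  then have z3: "z 3 = 1" by (simp add: z_def hv_def)
  define r where "r = (\<lambda>j k. \<Sum>i\<in>{0,1}. ue xm xp (sqrt (xp * xm)) i j * ue xm xp (sqrt (xp * xm)) i k / nX xm xp i)"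
  have ent: "PP w (nX xm xp) $ j $ k = complex_of_real (r j k)"
    if "z j = 1" "z k = 1" for j k
    unfolding PP_def[OF eb] vec_lambda_beta r_def using that by (simp add: w_def u_def)
  have "expval psi (PP w (nX xm xp)) = complex_of_real ((r 0 0 - r 0 3 - r 3 0 + r 3 3) / 2)"
    unfolding expval_psi ent[OF z0 z0] ent[OF z0 z3] ent[OF z3 z0] ent[OF z3 z3]
    by (simp only: of_real_diff of_real_add of_real_divide of_real_numeral)
  also have "\<dots> = complex_of_real (xm / (xm + xp))"
    by (simp only: r_def real_val[OF assms(1,2)])
  finally have "expval psi (PP w (nX xm xp)) = complex_of_real (xm / (xm + xp))" .
  then show ?thesis using Th t_def by simp
qed



theorem mainTheorem2:
  fixes xm xp \<omega> :: real
  assumes "xm > xp" and "xp > 0" and "\<omega> > 0"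
  shows "spectrum (Xop xm xp) = {- complex_of_real xm, - complex_of_real xp,
                       complex_of_real xp, complex_of_real xm}
    \<and> (\<forall>t. heis (Hop \<omega>) (Xop xm xp) t
               = cscale (complex_of_real (cos (\<omega> * t))) (Xop xm xp)
                 + cscale (complex_of_real (sin (\<omega> * t))) (Yop xm xp))
    \<and> (\<forall>t. heis (Hop \<omega>) (Yop xm xp) t
               = cscale (complex_of_real (cos (\<omega> * t))) (Yop xm xp)
                 - cscale (complex_of_real (sin (\<omega> * t))) (Xop xm xp))
    \<and> (1/3) * (\<Sum>k<3. expval psi (Theta (heis (Hop \<omega>) (Xop xm xp) (2 * pi * real k / (3 * \<omega>)))))
           = complex_of_real (inverse (1 + xp / xm))"
proof -
  have p1: "spectrum (Xop xm xp) = {- complex_of_real xm, - complex_of_real xp,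
                       complex_of_real xp, complex_of_real xm}"
    using partSpec assms by simp
  have s: "(\<Sum>k<3. expval psi (Theta (heis (Hop \<omega>) (Xop xm xp) (2 * pi * real k / (3 * \<omega>)))))
        = (\<Sum>k<(3::nat). complex_of_real (xm / (xm + xp)))"
    by (rule sum.cong) (simp_all add: term_k assms)
  have inv: "inverse (1 + xp / xm) = xm / (xm + xp)" using assms by (simp add: field_simps)
  have p4: "(1/3) * (\<Sum>k<3. expval psi (Theta (heis (Hop \<omega>) (Xop xm xp) (2 * pi * real k / (3 * \<omega>)))))
           = complex_of_real (inverse (1 + xp / xm))"
    unfolding s inv by simp
  show ?thesis using p1 p4 partX partY by blast
qed

end
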